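(* Let $R$ be an associative ring with identity and involution $*$, and let $a\in R^{\#}\cap R^{\dagger}$. Then $a\in R^{SEP}$ if and only if $a(a^{\#})^*a^{\dagger}$ and $a^{\dagger}a^2$ are left $a$-equivalent, i.e. $a\cdot a(a^{\#})^*a^{\dagger}=a\cdot a^{\dagger}a^2$.
   Context: An involution on $R$ is a map $x\mapsto x^*$ with $(x^* )^*=x$, $(x+y)^*=x^*+y^*$, $(xy)^*=y^*x^*$. An element $a$ is Moore–Penrose invertible if there is $b$ with $aba=a$, $bab=b$, $(ab)^*=ab$, $(ba)^*=ba$; such $b$ is unique, denoted $a^{\dagger}$, and $R^{\dagger}$ is the set of such $a$. An element $a$ is group invertible if there is $b$ with $aba=a$, $bab=b$, $ab=ba$; such $b$ is unique, denoted $a^{\#}$, and $R^{\#}$ is the set of such $a$. For $a\in R^{\#}\cap R^{\dagger}$, $a$ is SEP if $a^*=a^{\dagger}=a^{\#}$; $R^{SEP}$ denotes the set of SEP elements. For $x,b,c\in R$, $b$ and $c$ are left $x$-equivalent if $xb=xc$. *)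

theory Defs
  imports Main
begin

definition involution :: "('a::ring_1 \<Rightarrow> 'a) \<Rightarrow> bool" where
  "involution s \<longleftrightarrow> (\<forall>x. s (s x) = x) \<and> (\<forall>x y. s (x + y) = s x + s y)
                      \<and> (\<forall>x y. s (x * y) = s y * s x)"

definition is_mp_inverse :: "('a::ring_1 \<Rightarrow> 'a) \<Rightarrow> 'a \<Rightarrow> 'a \<Rightarrow> bool" where
  "is_mp_inverse s a b \<longleftrightarrow> a * b * a = a \<and> b * a * b = b \<and> s (a * b) = a * b \<and> s (b * a) = b * a"

definition mp_invertible :: "('a::ring_1 \<Rightarrow> 'a) \<Rightarrow> 'a \<Rightarrow> bool" where
  "mp_invertible s a \<longleftrightarrow> (\<exists>b. is_mp_inverse s a b)"

definition mp_inv :: "('a::ring_1 \<Rightarrow> 'a) \<Rightarrow> 'a \<Rightarrow> 'a" where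
  "mp_inv s a = (THE b. is_mp_inverse s a b)"

definition is_group_inverse :: "'a::ring_1 \<Rightarrow> 'a \<Rightarrow> bool" where
  "is_group_inverse a b \<longleftrightarrow> a * b * a = a \<and> b * a * b = b \<and> a * b = b * a"

definition group_invertible :: "'a::ring_1 \<Rightarrow> bool" where
  "group_invertible a \<longleftrightarrow> (\<exists>b. is_group_inverse a b)"

definition group_inv :: "'a::ring_1 \<Rightarrow> 'a" where
  "group_inv a = (THE b. is_group_inverse a b)"

definition SEP :: "('a::ring_1 \<Rightarrow> 'a) \<Rightarrow> 'a \<Rightarrow> bool" where
  "SEP s a \<longleftrightarrow> group_invertible a \<and> mp_invertible s a
              \<and> s a = mp_inv s a \<and> mp_inv s a = group_inv a"

definition left_equiv :: "'a::ring_1 \<Rightarrow> 'a \<Rightarrow> 'a \<Rightarrow> bool" where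
  "left_equiv x b c \<longleftrightarrow> x * b = x * c"

end

theory Submission
  imports Defs
begin

lemma grp_uniq:
  fixes a b c :: "'a::ring_1"
  assumes "is_group_inverse a b" "is_group_inverse a c"
  shows "b = c"
proof -
  have b1: "a*b*a = a" "b*a*b = b" "a*b = b*a" and c1: "a*c*a = a" "c*a*c = c" "a*c = c*a"
    using assms by (auto simp: is_group_inverse_def)
  have "a*b = a*c*a*b" using c1 by metis
  also have "... = c*a*(a*b)" using c1 by (metis mult.assoc)
  also have "... = c*(a*b*a)" using b1 by (metis mult.assoc)
  also have "... = c*a" using b1 by simp
  finally have ab: "a*b = a*c" using c1 by simp
  have "b = b*(a*b)" using b1 by (simp add: mult.assoc)
  also have "... = (b*a)*c" using ab by (simp add: mult.assoc)
  also have "... = (a*c)*c" using b1 ab by simp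
  also have "... = c" using c1 by simp
  finally show ?thesis .
qed

lemma mp_uniq:
  fixes a b c :: "'a::ring_1"
  assumes inv: "involution s" and "is_mp_inverse s a b" "is_mp_inverse s a c"
  shows "b = c"
proof -
  have ss: "\<And>x. s (s x) = x" and sm: "\<And>x y. s (x*y) = s y * s x" using inv by (auto simp: involution_def)
  have b1: "a*b*a = a" "b*a*b = b" "s (a*b) = a*b" "s (b*a) = b*a"
   and c1: "a*c*a = a" "c*a*c = c" "s (a*c) = a*c" "s (c*a) = c*a"
    using assms by (auto simp: is_mp_inverse_def)
  have ab: "a*b = a*c"
  proof -
    have "a*b = s (a*b)" using b1 by simp
    also have "... = s (a*c*a*b)" using c1 by simp
    also have "... = s (a*b) * s (a*c)" by (simp add: sm mult.assoc)
    also have "... = a*b*(a*c)" using b1 c1 by simp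
    also have "... = a*c" using b1 by (metis mult.assoc)
    finally show ?thesis .
  qed
  have ba: "b*a = c*a"
  proof -
    have "b*a = s (b*a)" using b1 by simp
    also have "... = s (b*(a*c*a))" using c1 by simp
    also have "... = s (c*a) * s (b*a)" by (simp add: sm mult.assoc)
    also have "... = c*a*(b*a)" using b1 c1 by simp
    also have "... = c*a" using b1 by (metis mult.assoc)
    finally show ?thesis .
  qed
  have "b = b*a*b" using b1 by simp
  also have "... = c*a*c" using ab ba by (simp add: mult.assoc)
  also have "... = c" using c1 by simp
  finally show ?thesis .
qed

lemma grp_inv_is:
  assumes "group_invertible a" shows "is_group_inverse a (group_inv a)"
proof -
  obtain b where "is_group_inverse a b" using assms by (auto simp: group_invertible_def)
  thus ?thesis unfolding group_inv_def by (metis theI grp_uniq)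
qed

lemma mp_inv_is:
  assumes "involution s" "mp_invertible s a" shows "is_mp_inverse s a (mp_inv s a)"
proof -
  obtain b where "is_mp_inverse s a b" using assms by (auto simp: mp_invertible_def)
  thus ?thesis unfolding mp_inv_def by (metis theI mp_uniq assms(1))
qed

theorem theorem5p1:
  fixes s :: "'a::ring_1 \<Rightarrow> 'a" and a :: 'a
  assumes "involution s"
    and "group_invertible a" and "mp_invertible s a"
  shows "SEP s a \<longleftrightarrow>
         left_equiv a (a * s (group_inv a) * mp_inv s a) (mp_inv s a * a ^ 2)"
proof -
  have ss: "\<And>x. s (s x) = x" and sm: "\<And>x y. s (x*y) = s y * s x"
    using assms(1) by (auto simp: involution_def)
  define x where "x = group_inv a"
  define y where "y = mp_inv s a"
  have x1: "a*x*a = a" "x*a*x = x" "a*x = x*a"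
    using grp_inv_is[OF assms(2)] unfolding x_def is_group_inverse_def by auto
  have y1: "a*y*a = a" "y*a*y = y" "s (a*y) = a*y" "s (y*a) = y*a"
    using mp_inv_is[OF assms(1,3)] unfolding y_def is_mp_inverse_def by auto
  have xaa: "x*(a*a) = a" using x1 by (metis mult.assoc)
  have aya2: "a*(y*a^2) = a*a" using y1 by (simp add: power2_eq_square mult.assoc[symmetric])
  show ?thesis
  proof
    assume "SEP s a"
    hence sa: "s a = y" and yx: "y = x" unfolding SEP_def x_def y_def by auto
    have sx: "s x = a" using sa yx ss by metis
    have "a*(a*s x*y) = a*a*(a*x)" using sx yx by (metis mult.assoc)
    also have "... = a*(a*x*a)" using x1 by (metis mult.assoc)
    also have "... = a*a" using x1 by (metis mult.assoc)
    finally show "left_equiv a (a * s (group_inv a) * mp_inv s a) (mp_inv s a * a ^ 2)"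
      unfolding left_equiv_def x_def[symmetric] y_def[symmetric] using aya2 by simp
  next
    assume "left_equiv a (a * s (group_inv a) * mp_inv s a) (mp_inv s a * a ^ 2)"
    hence H: "a*a*(s x*y) = a*a" unfolding left_equiv_def x_def[symmetric] y_def[symmetric]
      using aya2 by (simp add: mult.assoc)
    have E2: "a*(s x*y) = a"
    proof -
      have "a*(s x*y) = x*(a*a)*(s x*y)" using xaa by simp
      also have "... = x*(a*a)" using H by (simp add: mult.assoc)
      finally show ?thesis using xaa by simp
    qed
    have E2': "x*a*(s x*y) = x*a" using E2 by (simp add: mult.assoc)
    have P: "a*y = x*a"
    proof -
      have "a = x*a*(s x*y)*a" using E2' xaa by (simp add: mult.assoc)
      hence "a*y = x*a*(s x*y)*(a*y)" by (metis mult.assoc)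
      also have "... = x*a*(s x*y)" using y1 by (simp add: mult.assoc)
      finally show ?thesis using E2' by simp
    qed
    have hx: "s (x*a) = x*a" using y1 P by simp
    have xaya: "x*a = y*a"
    proof -
      have "x*a = s (x*a)" using hx by simp
      also have "... = s (x*a*(y*a))" using y1 by (simp add: mult.assoc)
      also have "... = y*a*(x*a)" using hx y1 sm by simp
      also have "... = y*a" using x1 by (metis mult.assoc)
      finally show ?thesis .
    qed
    have yx: "y = x"
    proof -
      have "y = y*a*y" using y1 by simp
      also have "... = x*(a*y)" using xaya by (metis mult.assoc)
      also have "... = x*(x*a)" using P by simp
      also have "... = x*a*x" using x1 by (simp add: mult.assoc)
      also have "... = x" using x1 by simp
      finally show ?thesis .
    qed
    have ay: "a*y = y*a" using P xaya by simp
    have py: "y*a*s y = s y"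
    proof -
      have "y*a*y = y" using y1 by simp
      hence "s y = s (y*(a*y))" by (simp add: mult.assoc)
      also have "... = s (a*y) * s y" by (rule sm)
      also have "... = a*y*s y" using y1(3) by simp
      finally show ?thesis using ay by simp
    qed
    have syy: "s y * y = y*a"
    proof -
      have "a*(s y*y) = a" using E2 yx by simp
      hence "y*(a*(s y*y)) = y*a" by simp
      hence "(y*a*s y)*y = y*a" by (simp only: mult.assoc)
      thus ?thesis using py by simp
    qed
    have yaa: "y*a*a = a" using xaya yx xaa by (metis mult.assoc)
    have "s a = s (y*a*a)" using yaa by simp
    also have "... = s a * s (y*a)" by (rule sm)
    also have "... = s a * (s y * y)" using y1(4) syy by simp
    also have "... = (s a * s y) * y" by (simp only: mult.assoc)
    also have "... = s (y*a) * y" by (simp only: sm)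
    also have "... = y" using y1 by simp
    finally have sa: "s a = y" .
    show "SEP s a" unfolding SEP_def using assms(2,3) sa yx x_def y_def by simp
  qed
qed

end
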